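(* Let $\Omega$ be a finite set, $(H_i\mid i\in\Omega)$ finite abelian groups with $h_i=|H_i|\geqslant2$ for all $i$, $\mathbf{H}=\prod_{i\in\Omega}H_i$, $\mathbf{P}=(\Omega,\preccurlyeq_{\mathbf{P}})$ a poset. Let $\alpha\in\hat{\mathbf{H}}$ with $\langle\mathrm{supp}(\alpha)\rangle_{\overline{\mathbf{P}}}=D$, and let $X=(\Omega-D)\cup\min_{\mathbf{P}}(D)$. Then $\deg(F(\alpha))=|X|=|\Omega|-|D|+|\min_{\mathbf{P}}(D)|$, and the leading coefficient of $F(\alpha)$ equals $$(-1)^{|\min_{\mathbf{P}}(D)|}\Big(\prod_{i\in X-\max_{\mathbf{P}}(X)}h_i\Big)\Big(\prod_{i\in\max_{\mathbf{P}}(X)-\min_{\mathbf{P}}(D)}(h_i-1)\Big).$$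
   Context: $\hat{\mathbf{H}}$ is the character group of $\mathbf{H}$, identified with $\prod_i\hat{H_i}$ via $\alpha(\beta)=\prod_i\alpha_{(i)}(\beta_{(i)})$; $\mathrm{supp}$ of a codeword is the set of coordinates where it is not the identity. $\max_{\mathbf{P}}(B)$, $\min_{\mathbf{P}}(B)$ are the maximal, minimal elements of $B$. For a poset $\mathbf{Q}$ on $\Omega$, $\langle B\rangle_{\mathbf{Q}}$ is the down-closure of $B$ in $\mathbf{Q}$ and $\mathrm{wt}_{\mathbf{Q}}(\beta)=|\langle\mathrm{supp}(\beta)\rangle_{\mathbf{Q}}|$. $\overline{\mathbf{P}}$ is the dual poset. With $n=|\Omega|$, $F(\alpha)=\sum_{l=0}^{n}\big(\sum_{\beta\in\mathbf{H},\ \mathrm{wt}_{\mathbf{P}}(\beta)=l}\alpha(\beta)\big)x^l$. *)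

theory Defs
  imports "HOL-Algebra.Group" "HOL-Computational_Algebra.Polynomial"
begin

definition character :: "('a, 'b) monoid_scheme \<Rightarrow> ('a \<Rightarrow> complex) \<Rightarrow> bool" where
  "character G \<chi> \<longleftrightarrow>
     (\<forall>x\<in>carrier G. \<forall>y\<in>carrier G. \<chi> (x \<otimes>\<^bsub>G\<^esub> y) = \<chi> x * \<chi> y) \<and>
     (\<forall>x\<in>carrier G. \<chi> x \<noteq> 0)"

definition prod_carrier :: "'i set \<Rightarrow> ('i \<Rightarrow> ('a, 'b) monoid_scheme) \<Rightarrow> ('i \<Rightarrow> 'a) set" where
  "prod_carrier \<Omega> H = (\<Pi>\<^sub>E i\<in>\<Omega>. carrier (H i))"

definition supp_word :: "'i set \<Rightarrow> ('i \<Rightarrow> ('a, 'b) monoid_scheme) \<Rightarrow> ('i \<Rightarrow> 'a) \<Rightarrow> 'i set" where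
  "supp_word \<Omega> H \<beta> = {i\<in>\<Omega>. \<beta> i \<noteq> \<one>\<^bsub>H i\<^esub>}"

definition supp_char :: "'i set \<Rightarrow> ('i \<Rightarrow> ('a, 'b) monoid_scheme) \<Rightarrow> ('i \<Rightarrow> 'a \<Rightarrow> complex) \<Rightarrow> 'i set" where
  "supp_char \<Omega> H \<alpha> = {i\<in>\<Omega>. \<exists>x\<in>carrier (H i). \<alpha> i x \<noteq> 1}"

definition char_eval :: "'i set \<Rightarrow> ('i \<Rightarrow> 'a \<Rightarrow> complex) \<Rightarrow> ('i \<Rightarrow> 'a) \<Rightarrow> complex" where
  "char_eval \<Omega> \<alpha> \<beta> = (\<Prod>i\<in>\<Omega>. \<alpha> i (\<beta> i))"

text \<open>Down-closure of B in the poset (Omega, Q), where (x,y) in Q means x <= y.\<close>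
definition down_closure :: "'i set \<Rightarrow> ('i \<times> 'i) set \<Rightarrow> 'i set \<Rightarrow> 'i set" where
  "down_closure \<Omega> Q B = {j\<in>\<Omega>. \<exists>i\<in>B. (j, i) \<in> Q}"

definition min_elems :: "('i \<times> 'i) set \<Rightarrow> 'i set \<Rightarrow> 'i set" where
  "min_elems Q B = {x\<in>B. \<forall>y\<in>B. (y, x) \<in> Q \<longrightarrow> y = x}"

definition max_elems :: "('i \<times> 'i) set \<Rightarrow> 'i set \<Rightarrow> 'i set" where
  "max_elems Q B = {x\<in>B. \<forall>y\<in>B. (x, y) \<in> Q \<longrightarrow> y = x}"

definition wt :: "'i set \<Rightarrow> ('i \<times> 'i) set \<Rightarrow> ('i \<Rightarrow> ('a, 'b) monoid_scheme) \<Rightarrow> ('i \<Rightarrow> 'a) \<Rightarrow> nat" where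
  "wt \<Omega> Q H \<beta> = card (down_closure \<Omega> Q (supp_word \<Omega> H \<beta>))"

definition F_poly :: "'i set \<Rightarrow> ('i \<times> 'i) set \<Rightarrow> ('i \<Rightarrow> ('a, 'b) monoid_scheme) \<Rightarrow> ('i \<Rightarrow> 'a \<Rightarrow> complex) \<Rightarrow> complex poly" where
  "F_poly \<Omega> P H \<alpha> =
     (\<Sum>l\<in>{0..card \<Omega>}.
        monom (\<Sum>\<beta>\<in>{\<beta>\<in>prod_carrier \<Omega> H. wt \<Omega> P H \<beta> = l}. char_eval \<Omega> \<alpha> \<beta>) l)"

end

theory Submission
  imports Defs
begin

locale pctx =
  fixes \<Omega> :: "'i set" and H :: "'i \<Rightarrow> ('a, 'b) monoid_scheme"
    and P :: "('i \<times> 'i) set" and \<alpha> :: "'i \<Rightarrow> 'a \<Rightarrow> complex"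
  assumes fin: "finite \<Omega>"
    and grp: "\<And>i. i \<in> \<Omega> \<Longrightarrow> comm_group (H i)"
    and finH: "\<And>i. i \<in> \<Omega> \<Longrightarrow> finite (carrier (H i))"
    and po: "partial_order_on \<Omega> P"
    and chr: "\<And>i. i \<in> \<Omega> \<Longrightarrow> character (H i) (\<alpha> i)"
begin

lemma PO: "\<And>a b. (a,b) \<in> P \<Longrightarrow> a \<in> \<Omega> \<and> b \<in> \<Omega>"
  "\<And>a. a \<in> \<Omega> \<Longrightarrow> (a,a) \<in> P"
  "\<And>a b c. (a,b) \<in> P \<Longrightarrow> (b,c) \<in> P \<Longrightarrow> (a,c) \<in> P"
  "\<And>a b. (a,b) \<in> P \<Longrightarrow> (b,a) \<in> P \<Longrightarrow> a = b"
  using partial_order_onD[OF po] unfolding refl_on_def trans_def antisym_def by blast+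

lemma char_one: "i \<in> \<Omega> \<Longrightarrow> \<alpha> i \<one>\<^bsub>H i\<^esub> = 1"
proof -
  assume i: "i \<in> \<Omega>"
  interpret G: comm_group "H i" using grp[OF i] .
  have "\<alpha> i (\<one>\<^bsub>H i\<^esub> \<otimes>\<^bsub>H i\<^esub> \<one>\<^bsub>H i\<^esub>) = \<alpha> i \<one>\<^bsub>H i\<^esub> * \<alpha> i \<one>\<^bsub>H i\<^esub>"
    using chr[OF i] unfolding character_def by blast
  moreover have "\<alpha> i \<one>\<^bsub>H i\<^esub> \<noteq> 0" using chr[OF i] unfolding character_def by blast
  ultimately show ?thesis by simp
qed

lemma char_sum: "i \<in> \<Omega> \<Longrightarrow> (\<Sum>x\<in>carrier (H i). \<alpha> i x) =
   (if i \<in> supp_char \<Omega> H \<alpha> then 0 else of_nat (card (carrier (H i))))"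
proof -
  assume i: "i \<in> \<Omega>"
  interpret G: comm_group "H i" using grp[OF i] .
  show ?thesis
  proof (cases "i \<in> supp_char \<Omega> H \<alpha>")
    case False
    then have "\<forall>x\<in>carrier (H i). \<alpha> i x = 1" using i unfolding supp_char_def by auto
    then show ?thesis using False by simp
  next
    case True
    then obtain y where y: "y \<in> carrier (H i)" "\<alpha> i y \<noteq> 1" unfolding supp_char_def by auto
    have "(\<Sum>x\<in>carrier (H i). \<alpha> i y * \<alpha> i x) = (\<Sum>x\<in>carrier (H i). \<alpha> i x)"
    proof (rule sum.reindex_bij_witness[where j = "\<lambda>x. y \<otimes>\<^bsub>H i\<^esub> x" and i = "\<lambda>x. inv\<^bsub>H i\<^esub> y \<otimes>\<^bsub>H i\<^esub> x"])
      fix a assume a: "a \<in> carrier (H i)"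
      show "inv\<^bsub>H i\<^esub> y \<otimes>\<^bsub>H i\<^esub> (y \<otimes>\<^bsub>H i\<^esub> a) = a" using a y by (simp add: G.m_assoc[symmetric])
      show "y \<otimes>\<^bsub>H i\<^esub> a \<in> carrier (H i)" using a y by simp
      show "y \<otimes>\<^bsub>H i\<^esub> (inv\<^bsub>H i\<^esub> y \<otimes>\<^bsub>H i\<^esub> a) = a" using a y by (simp add: G.m_assoc[symmetric])
      show "inv\<^bsub>H i\<^esub> y \<otimes>\<^bsub>H i\<^esub> a \<in> carrier (H i)" using a y by simp
      show "\<alpha> i (y \<otimes>\<^bsub>H i\<^esub> a) = \<alpha> i y * \<alpha> i a" using a y chr[OF i] unfolding character_def by blast
    qed
    then have "\<alpha> i y * (\<Sum>x\<in>carrier (H i). \<alpha> i x) = (\<Sum>x\<in>carrier (H i). \<alpha> i x)"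
      by (simp add: sum_distrib_left)
    then have "(\<Sum>x\<in>carrier (H i). \<alpha> i x) = 0" using y(2)
      by (metis mult_cancel_right2)
    then show ?thesis using True by simp
  qed
qed

definition g where "g \<beta> = down_closure \<Omega> P (supp_word \<Omega> H \<beta>)"
definition S where "S I = (\<Sum>\<beta>\<in>{\<beta>\<in>prod_carrier \<Omega> H. g \<beta> = I}. char_eval \<Omega> \<alpha> \<beta>)"

lemma finPC: "finite (prod_carrier \<Omega> H)"
  unfolding prod_carrier_def using fin finH by (intro finite_PiE) auto

lemma g_sub: "g \<beta> \<subseteq> \<Omega>" unfolding g_def down_closure_def by auto

lemma g_mono_change:
  assumes agree: "\<And>i. i \<in> \<Omega> - {s} \<Longrightarrow> \<beta> i = \<beta>' i"
    and u: "u \<in> supp_word \<Omega> H \<beta>'" and su: "(s,u) \<in> P"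
  shows "g \<beta> \<subseteq> g \<beta>'"
proof
  fix j assume "j \<in> g \<beta>"
  then obtain v where v: "v \<in> supp_word \<Omega> H \<beta>" "(j,v) \<in> P" "j \<in> \<Omega>"
    unfolding g_def down_closure_def by auto
  show "j \<in> g \<beta>'"
  proof (cases "v = s")
    case True
    then have "(j,u) \<in> P" using v su PO(3) by blast
    then show ?thesis using u v unfolding g_def down_closure_def by auto
  next
    case False
    then have "v \<in> supp_word \<Omega> H \<beta>'" using v agree unfolding supp_word_def by auto
    then show ?thesis using v unfolding g_def down_closure_def by auto
  qed
qed

lemma g_change:
  assumes agree: "\<And>i. i \<in> \<Omega> - {s} \<Longrightarrow> \<beta> i = \<beta>' i"
    and t: "t \<in> g \<beta>" and st: "(s,t) \<in> P" "s \<noteq> t"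
  shows "g \<beta>' = g \<beta>"
proof -
  obtain u where u: "u \<in> supp_word \<Omega> H \<beta>" "(t,u) \<in> P"
    using t unfolding g_def down_closure_def by auto
  have su: "(s,u) \<in> P" using u st PO(3) by blast
  have "s \<noteq> u" using u st PO(4) by blast
  then have u': "u \<in> supp_word \<Omega> H \<beta>'" using u agree unfolding supp_word_def by auto
  show ?thesis
    using g_mono_change[OF agree u' su] g_mono_change[of s \<beta>' \<beta> u] agree u su by auto
qed

lemma ce_upd:
  assumes s: "s \<in> \<Omega>"
  shows "char_eval \<Omega> \<alpha> (\<beta>(s := z)) = \<alpha> s z * (\<Prod>i\<in>\<Omega>-{s}. \<alpha> i (\<beta> i))"
proof -
  have "char_eval \<Omega> \<alpha> (\<beta>(s := z)) = \<alpha> s z * (\<Prod>i\<in>\<Omega>-{s}. \<alpha> i ((\<beta>(s := z)) i))"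
    unfolding char_eval_def using fin s by (simp add: prod.remove)
  also have "(\<Prod>i\<in>\<Omega>-{s}. \<alpha> i ((\<beta>(s := z)) i)) = (\<Prod>i\<in>\<Omega>-{s}. \<alpha> i (\<beta> i))"
    by (rule prod.cong) auto
  finally show ?thesis .
qed

lemma S_zero:
  assumes s: "s \<in> supp_char \<Omega> H \<alpha>" and t: "t \<in> I" and st: "(s,t) \<in> P" "s \<noteq> t"
  shows "S I = 0"
proof -
  have sO: "s \<in> \<Omega>" using s unfolding supp_char_def by auto
  interpret G: comm_group "H s" using grp[OF sO] .
  obtain y where y: "y \<in> carrier (H s)" "\<alpha> s y \<noteq> 1" using s unfolding supp_char_def by auto
  let ?A = "{\<beta>\<in>prod_carrier \<Omega> H. g \<beta> = I}"
  define \<phi> where "\<phi> \<beta> = \<beta>(s := y \<otimes>\<^bsub>H s\<^esub> \<beta> s)" for \<beta>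
  define \<psi> where "\<psi> \<beta> = \<beta>(s := inv\<^bsub>H s\<^esub> y \<otimes>\<^bsub>H s\<^esub> \<beta> s)" for \<beta>
  have mem: "\<beta>(s := z) \<in> ?A" if b: "\<beta> \<in> ?A" and z: "z \<in> carrier (H s)" for \<beta> z
  proof -
    have "\<beta>(s := z) \<in> prod_carrier \<Omega> H" using b z sO unfolding prod_carrier_def
      by (auto simp: PiE_iff extensional_def)
    moreover have "g (\<beta>(s := z)) = g \<beta>"
      by (rule g_change[where t = t]) (use b t st in auto)
    ultimately show ?thesis using b by auto
  qed
  have bs: "\<beta> s \<in> carrier (H s)" if "\<beta> \<in> ?A" for \<beta>
    using that sO unfolding prod_carrier_def by auto
  have "(\<Sum>\<beta>\<in>?A. \<alpha> s y * char_eval \<Omega> \<alpha> \<beta>) = (\<Sum>\<beta>\<in>?A. char_eval \<Omega> \<alpha> \<beta>)"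
  proof (rule sum.reindex_bij_witness[where j = \<phi> and i = \<psi>])
    fix a assume a: "a \<in> ?A"
    note as = bs[OF a]
    show "\<psi> (\<phi> a) = a" unfolding \<phi>_def \<psi>_def using as y
      by (auto simp: G.m_assoc[symmetric])
    show "\<phi> a \<in> ?A" unfolding \<phi>_def using mem[OF a] as y by simp
    show "\<phi> (\<psi> a) = a" unfolding \<phi>_def \<psi>_def using as y
      by (auto simp: G.m_assoc[symmetric])
    show "\<psi> a \<in> ?A" unfolding \<psi>_def using mem[OF a] as y by simp
    have "\<alpha> s (y \<otimes>\<^bsub>H s\<^esub> a s) = \<alpha> s y * \<alpha> s (a s)"
      using as y chr[OF sO] unfolding character_def by blast
    moreover have "char_eval \<Omega> \<alpha> a = \<alpha> s (a s) * (\<Prod>i\<in>\<Omega>-{s}. \<alpha> i (a i))"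
      using ce_upd[OF sO, of a "a s"] by simp
    ultimately show "char_eval \<Omega> \<alpha> (\<phi> a) = \<alpha> s y * char_eval \<Omega> \<alpha> a"
      unfolding \<phi>_def using ce_upd[OF sO] by simp
  qed
  then have "\<alpha> s y * S I = S I" unfolding S_def by (simp add: sum_distrib_left)
  then show ?thesis using y(2) by (metis mult_cancel_right2)
qed

definition dclosed where "dclosed I \<longleftrightarrow> I \<subseteq> \<Omega> \<and> (\<forall>a b. b \<in> I \<longrightarrow> (a,b) \<in> P \<longrightarrow> a \<in> I)"

lemma exists_max:
  assumes I: "I \<subseteq> \<Omega>" and x: "x \<in> I"
  shows "\<exists>m\<in>max_elems P I. (x,m) \<in> P"
proof -
  define U where "U = {y\<in>I. (x,y) \<in> P}"
  define f where "f y = card {z\<in>\<Omega>. (z,y) \<in> P}" for y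
  have finU: "finite U" using I fin unfolding U_def by (auto intro: finite_subset)
  have "x \<in> U" using x I PO(2) unfolding U_def by auto
  then have ne: "f ` U \<noteq> {}" by auto
  have "Max (f ` U) \<in> f ` U" using finU ne by (intro Max_in) auto
  then obtain m where m: "m \<in> U" "f m = Max (f ` U)" by auto
  have mx: "f y \<le> f m" if "y \<in> U" for y using m finU that by auto
  have "m \<in> max_elems P I"
    unfolding max_elems_def
  proof (intro CollectI conjI ballI impI)
    show "m \<in> I" using m unfolding U_def by auto
    fix y assume y: "y \<in> I" "(m,y) \<in> P"
    have yU: "y \<in> U" using y m PO(3) unfolding U_def by auto
    show "y = m"
    proof (rule ccontr)
      assume ne: "y \<noteq> m"
      have "{z\<in>\<Omega>. (z,m) \<in> P} \<subset> {z\<in>\<Omega>. (z,y) \<in> P}"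
      proof
        show "{z\<in>\<Omega>. (z,m) \<in> P} \<subseteq> {z\<in>\<Omega>. (z,y) \<in> P}" using y PO(3) by blast
        have "y \<in> \<Omega>" "(y,y) \<in> P" "(y,m) \<notin> P" using y ne PO by blast+
        then show "{z\<in>\<Omega>. (z,m) \<in> P} \<noteq> {z\<in>\<Omega>. (z,y) \<in> P}" by blast
      qed
      then have "f m < f y" unfolding f_def using fin by (intro psubset_card_mono) auto
      then show False using mx[OF yU] by simp
    qed
  qed
  then show ?thesis using m unfolding U_def by auto
qed

lemma dc_char:
  assumes I: "dclosed I" and B: "B \<subseteq> \<Omega>"
  shows "down_closure \<Omega> P B = I \<longleftrightarrow> B \<subseteq> I \<and> max_elems P I \<subseteq> B"
proof
  assume h: "down_closure \<Omega> P B = I"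
  have "B \<subseteq> down_closure \<Omega> P B" using B PO(2) unfolding down_closure_def by auto
  then have BI: "B \<subseteq> I" using h by simp
  moreover have "max_elems P I \<subseteq> B"
  proof
    fix m assume m: "m \<in> max_elems P I"
    then have "m \<in> down_closure \<Omega> P B" using h unfolding max_elems_def by auto
    then obtain b where "b \<in> B" "(m,b) \<in> P" unfolding down_closure_def by auto
    then show "m \<in> B" using m BI unfolding max_elems_def by auto
  qed
  ultimately show "B \<subseteq> I \<and> max_elems P I \<subseteq> B" by simp
next
  assume h: "B \<subseteq> I \<and> max_elems P I \<subseteq> B"
  show "down_closure \<Omega> P B = I"
  proof
    show "down_closure \<Omega> P B \<subseteq> I" using I h unfolding dclosed_def down_closure_def by blast
    show "I \<subseteq> down_closure \<Omega> P B"
    proof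
      fix x assume x: "x \<in> I"
      obtain m where "m \<in> max_elems P I" "(x,m) \<in> P" using exists_max[OF _ x] I unfolding dclosed_def by auto
      then show "x \<in> down_closure \<Omega> P B" using h x I unfolding down_closure_def dclosed_def by auto
    qed
  qed
qed

lemma g_dclosed: "dclosed (g \<beta>)"
  unfolding dclosed_def g_def down_closure_def using PO by blast

lemma coeffF: "coeff (F_poly \<Omega> P H \<alpha>) k = (\<Sum>I\<in>{I. I \<subseteq> \<Omega> \<and> card I = k}. S I)"
proof -
  define c where "c k = (\<Sum>\<beta>\<in>{\<beta>\<in>prod_carrier \<Omega> H. wt \<Omega> P H \<beta> = k}. char_eval \<Omega> \<alpha> \<beta>)" for k
  have wtg: "wt \<Omega> P H \<beta> = card (g \<beta>)" for \<beta> unfolding wt_def g_def by simp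
  have "coeff (F_poly \<Omega> P H \<alpha>) k = (\<Sum>l\<in>{0..card \<Omega>}. if l = k then c l else 0)"
    unfolding F_poly_def c_def by (simp add: coeff_sum coeff_monom)
  also have "\<dots> = (if k \<in> {0..card \<Omega>} then c k else 0)" using sum.delta[of "{0..card \<Omega>}" k c] by (simp add: eq_commute)
  also have "\<dots> = c k"
  proof -
    have "{\<beta>\<in>prod_carrier \<Omega> H. wt \<Omega> P H \<beta> = k} = {}" if kk: "k > card \<Omega>"
    proof -
      have "wt \<Omega> P H \<beta> \<le> card \<Omega>" for \<beta> using card_mono[OF fin g_sub, of \<beta>] wtg[of \<beta>] by simp
      then show ?thesis using kk by (auto simp: not_less[symmetric])
    qed
    then show ?thesis unfolding c_def by (cases "k \<le> card \<Omega>") (simp_all only: atLeastAtMost_iff not_le, auto)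
  qed
  also have "c k = (\<Sum>I\<in>{I. I \<subseteq> \<Omega> \<and> card I = k}.
      (\<Sum>\<beta>\<in>{x. x \<in> {\<beta>\<in>prod_carrier \<Omega> H. wt \<Omega> P H \<beta> = k} \<and> g x = I}. char_eval \<Omega> \<alpha> \<beta>))"
    unfolding c_def
    by (rule sum.group[symmetric]) (use finPC fin g_sub wtg in auto)
  also have "\<dots> = (\<Sum>I\<in>{I. I \<subseteq> \<Omega> \<and> card I = k}. S I)"
    unfolding S_def by (rule sum.cong) (auto simp: wtg intro!: sum.cong)
  finally show ?thesis .
qed

lemma main:
  fixes D X :: "'i set"
  assumes card2: "\<And>i. i \<in> \<Omega> \<Longrightarrow> card (carrier (H i)) \<ge> 2"
    and Dd: "D = down_closure \<Omega> (P\<inverse>) (supp_char \<Omega> H \<alpha>)"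
    and Xd: "X = (\<Omega> - D) \<union> min_elems P D"
  shows "degree (F_poly \<Omega> P H \<alpha>) = card X
    \<and> card X = card \<Omega> - card D + card (min_elems P D)
    \<and> lead_coeff (F_poly \<Omega> P H \<alpha>) =
        of_int ((-1) ^ card (min_elems P D)
          * (\<Prod>i\<in>X - max_elems P X. int (card (carrier (H i))))
          * (\<Prod>i\<in>max_elems P X - min_elems P D. int (card (carrier (H i))) - 1))"
proof -
  let ?sp = "supp_char \<Omega> H \<alpha>"
  let ?mD = "min_elems P D"
  let ?mX = "max_elems P X"
  have spO: "?sp \<subseteq> \<Omega>" unfolding supp_char_def by auto
  have DO: "D \<subseteq> \<Omega>" unfolding Dd down_closure_def by auto
  have Dup: "e \<in> D" if "d \<in> D" "(d,e) \<in> P" for d e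
    using that PO unfolding Dd down_closure_def by blast
  have Dsp: "\<exists>s\<in>?sp. (s,d) \<in> P" if "d \<in> D" for d
    using that unfolding Dd down_closure_def by auto
  have spD: "?sp \<subseteq> D" using spO PO(2) unfolding Dd down_closure_def by auto
  have mDD: "?mD \<subseteq> D" unfolding min_elems_def by auto
  have mDsp: "?mD \<subseteq> ?sp"
  proof
    fix m assume m: "m \<in> ?mD"
    then obtain s where "s \<in> ?sp" "(s,m) \<in> P" using Dsp mDD by blast
    then show "m \<in> ?sp" using m spD unfolding min_elems_def by auto
  qed
  have XO: "X \<subseteq> \<Omega>" using DO mDD Xd by auto
  have Xdc: "dclosed X" unfolding dclosed_def
  proof (intro conjI allI impI)
    show "X \<subseteq> \<Omega>" by (rule XO)
    fix a b assume b: "b \<in> X" and ab: "(a,b) \<in> P"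
    show "a \<in> X"
    proof (cases "a \<in> D")
      case False then show ?thesis using ab PO(1) Xd by auto
    next
      case True
      then have "b \<in> D" using Dup ab by blast
      then have "b \<in> ?mD" using b Xd by auto
      then have "a = b" using True ab unfolding min_elems_def by auto
      then show ?thesis using b by simp
    qed
  qed
  have mDmX: "?mD \<subseteq> ?mX"
  proof
    fix m assume m: "m \<in> ?mD"
    have "m \<in> X" using m Xd by auto
    moreover have "z = m" if "z \<in> X" "(m,z) \<in> P" for z
    proof -
      have "z \<in> D" using Dup m mDD that by blast
      then have "z \<in> ?mD" using that Xd by auto
      then show ?thesis using m that mDD unfolding min_elems_def by auto
    qed
    ultimately show "m \<in> ?mX" unfolding max_elems_def by auto
  qed
  have spX: "?sp \<inter> X \<subseteq> ?mD" using spD Xd by auto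
  have spX_iff: "i \<in> ?sp \<longleftrightarrow> i \<in> ?mD" if "i \<in> X" for i using that spX mDsp by auto
  have finX: "finite X" using XO fin by (rule finite_subset)
  have mXX: "?mX \<subseteq> X" unfolding max_elems_def by auto

  have cardX: "card X = card \<Omega> - card D + card ?mD"
  proof -
    have "card X = card (\<Omega> - D) + card ?mD"
      unfolding Xd by (rule card_Un_disjoint) (use fin mDD DO in \<open>auto intro: finite_subset\<close>)
    also have "card (\<Omega> - D) = card \<Omega> - card D" using DO fin by (simp add: card_Diff_subset finite_subset)
    finally show ?thesis .
  qed

  have S_sub: "I \<subseteq> X" if I: "I \<subseteq> \<Omega>" and SI: "S I \<noteq> 0" for I
  proof (rule ccontr)
    assume "\<not> I \<subseteq> X"
    then obtain j where j: "j \<in> I" "j \<notin> X" by auto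
    have jD: "j \<in> D" and jm: "j \<notin> ?mD" using j I Xd by auto
    have "{\<beta>\<in>prod_carrier \<Omega> H. g \<beta> = I} \<noteq> {}" using SI unfolding S_def by (metis sum.empty)
    then obtain \<beta> where "g \<beta> = I" by auto
    then have Idc: "dclosed I" using g_dclosed by metis
    obtain d where d: "d \<in> D" "(d,j) \<in> P" "d \<noteq> j" using jD jm unfolding min_elems_def by auto
    obtain s where s: "s \<in> ?sp" "(s,d) \<in> P" using Dsp d by blast
    have sj: "(s,j) \<in> P" using s d PO(3) by blast
    have "s \<noteq> j" using s d PO(4) by blast
    then have "S I = 0" using S_zero[OF s(1) j(1) sj] by simp
    then show False using SI by simp
  qed

  define A where "A i = (if i \<notin> X then {\<one>\<^bsub>H i\<^esub>} else if i \<in> ?mX then carrier (H i) - {\<one>\<^bsub>H i\<^esub>} else carrier (H i))" for i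
  have one_c: "\<one>\<^bsub>H i\<^esub> \<in> carrier (H i)" if "i \<in> \<Omega>" for i
    using grp[OF that] by (simp add: comm_group_def group.is_monoid monoid.one_closed)
  have setX: "{\<beta>\<in>prod_carrier \<Omega> H. g \<beta> = X} = PiE \<Omega> A"
  proof -
    have "g \<beta> = X \<longleftrightarrow> supp_word \<Omega> H \<beta> \<subseteq> X \<and> ?mX \<subseteq> supp_word \<Omega> H \<beta>" for \<beta>
      unfolding g_def by (rule dc_char[OF Xdc]) (auto simp: supp_word_def)
    then have eq: "g \<beta> = X \<longleftrightarrow> (\<forall>i\<in>\<Omega>. (i \<notin> X \<longrightarrow> \<beta> i = \<one>\<^bsub>H i\<^esub>) \<and> (i \<in> ?mX \<longrightarrow> \<beta> i \<noteq> \<one>\<^bsub>H i\<^esub>))" for \<beta>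
      unfolding supp_word_def using mXX XO by blast
    have L: "\<beta> \<in> PiE \<Omega> A" if b: "\<beta> \<in> {\<beta>\<in>prod_carrier \<Omega> H. g \<beta> = X}" for \<beta>
    proof -
      have "\<beta> \<in> PiE \<Omega> (\<lambda>i. carrier (H i))" "g \<beta> = X" using b unfolding prod_carrier_def by auto
      then show "\<beta> \<in> PiE \<Omega> A" unfolding eq A_def by (auto simp: PiE_iff)
    qed
    have R: "\<beta> \<in> {\<beta>\<in>prod_carrier \<Omega> H. g \<beta> = X}" if b: "\<beta> \<in> PiE \<Omega> A" for \<beta>
    proof -
      have "A i \<subseteq> carrier (H i)" if "i \<in> \<Omega>" for i using one_c[OF that] unfolding A_def by auto
      then have "\<beta> \<in> PiE \<Omega> (\<lambda>i. carrier (H i))" using b by (auto simp: PiE_iff)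
      moreover have "g \<beta> = X" unfolding eq
      proof (intro ballI conjI impI)
        fix i assume i: "i \<in> \<Omega>"
        have bi: "\<beta> i \<in> A i" using b i by (auto simp: PiE_iff)
        show "\<beta> i = \<one>\<^bsub>H i\<^esub>" if "i \<notin> X" using bi that unfolding A_def by auto
        show "\<beta> i \<noteq> \<one>\<^bsub>H i\<^esub>" if "i \<in> ?mX" using bi that mXX unfolding A_def by auto
      qed
      ultimately show ?thesis unfolding prod_carrier_def by auto
    qed
    show ?thesis using L R by blast
  qed
  define f where "f i = (\<Sum>x\<in>A i. \<alpha> i x)" for i
  have SX: "S X = (\<Prod>i\<in>\<Omega>. f i)"
    unfolding S_def setX f_def char_eval_def
    by (rule prod_sum_PiE[symmetric]) (use fin finH in \<open>auto simp: A_def\<close>)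
  have f1: "f i = 1" if "i \<in> \<Omega> - X" for i using that char_one unfolding f_def A_def by auto
  have f2: "f i = of_nat (card (carrier (H i)))" if "i \<in> X - ?mX" for i
  proof -
    have "i \<notin> ?sp" using that spX mDmX by auto
    then show ?thesis using that XO char_sum[of i] unfolding f_def A_def by auto
  qed
  have f3: "f i = (if i \<in> ?mD then 0 else of_nat (card (carrier (H i)))) - 1" if "i \<in> ?mX" for i
  proof -
    have iO: "i \<in> \<Omega>" "i \<in> X" using that mXX XO by auto
    have "f i = (\<Sum>x\<in>carrier (H i). \<alpha> i x) - \<alpha> i \<one>\<^bsub>H i\<^esub>"
      unfolding f_def A_def using that iO one_c[OF iO(1)] finH[OF iO(1)] by (simp add: sum_diff1)
    then show ?thesis using char_sum[OF iO(1)] char_one[OF iO(1)] spX_iff[OF iO(2)] by simp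
  qed
  have SXval: "S X = (-1) ^ card ?mD * (\<Prod>i\<in>X - ?mX. of_nat (card (carrier (H i))))
      * (\<Prod>i\<in>?mX - ?mD. of_nat (card (carrier (H i))) - 1)"
  proof -
    have "(\<Prod>i\<in>\<Omega>. f i) = (\<Prod>i\<in>\<Omega> - X. f i) * (\<Prod>i\<in>X. f i)"
      using prod.subset_diff[OF XO fin] by simp
    also have "(\<Prod>i\<in>\<Omega> - X. f i) = 1" using f1 by simp
    also have "(\<Prod>i\<in>X. f i) = (\<Prod>i\<in>X - ?mX. f i) * (\<Prod>i\<in>?mX. f i)"
      using prod.subset_diff[OF mXX finX] by simp
    also have "(\<Prod>i\<in>?mX. f i) = (\<Prod>i\<in>?mX - ?mD. f i) * (\<Prod>i\<in>?mD. f i)"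
      using prod.subset_diff[OF mDmX finite_subset[OF mXX finX]] by simp
    also have "(\<Prod>i\<in>X - ?mX. f i) = (\<Prod>i\<in>X - ?mX. of_nat (card (carrier (H i))))"
      using f2 by simp
    also have "(\<Prod>i\<in>?mX - ?mD. f i) = (\<Prod>i\<in>?mX - ?mD. of_nat (card (carrier (H i))) - 1)"
      using f3 by (intro prod.cong) auto
    also have "(\<Prod>i\<in>?mD. f i) = (\<Prod>i\<in>?mD. -1)"
      using f3 mDmX by (intro prod.cong) auto
    finally show ?thesis using SX by (simp add: mult_ac)
  qed
  define z where "z = (-1) ^ card ?mD
          * (\<Prod>i\<in>X - ?mX. int (card (carrier (H i))))
          * (\<Prod>i\<in>?mX - ?mD. int (card (carrier (H i))) - 1)"
  have SXz: "S X = of_int z" unfolding SXval z_def by (simp add: of_int_prod)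
  have z0: "z \<noteq> 0"
  proof -
    have "(\<Prod>i\<in>X - ?mX. int (card (carrier (H i)))) \<noteq> 0"
      using card2 XO finX by (subst prod_zero_iff) force+
    moreover have "(\<Prod>i\<in>?mX - ?mD. int (card (carrier (H i))) - 1) \<noteq> 0"
    proof (subst prod_zero_iff)
      show "finite (?mX - ?mD)" using finite_subset[OF mXX finX] by auto
      show "\<not> (\<exists>a\<in>?mX - ?mD. int (card (carrier (H a))) - 1 = 0)"
      proof
        assume "\<exists>a\<in>?mX - ?mD. int (card (carrier (H a))) - 1 = 0"
        then obtain a where "a \<in> \<Omega>" "int (card (carrier (H a))) - 1 = 0" using mXX XO by blast
        then show False using card2[of a] by simp
      qed
    qed
    ultimately show ?thesis unfolding z_def by simp
  qed

  have cX: "coeff (F_poly \<Omega> P H \<alpha>) (card X) = S X"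
  proof -
    have T: "finite {I. I \<subseteq> \<Omega> \<and> card I = card X}" using fin by (auto intro: finite_subset[of _ "Pow \<Omega>"])
    have XT: "X \<in> {I. I \<subseteq> \<Omega> \<and> card I = card X}" using XO by auto
    have "(\<Sum>I\<in>{I. I \<subseteq> \<Omega> \<and> card I = card X}. S I) = S X + (\<Sum>I\<in>{I. I \<subseteq> \<Omega> \<and> card I = card X} - {X}. S I)"
      using sum.remove[OF T XT] by simp
    also have "(\<Sum>I\<in>{I. I \<subseteq> \<Omega> \<and> card I = card X} - {X}. S I) = 0"
    proof (rule sum.neutral, rule ballI, rule ccontr)
      fix I assume I: "I \<in> {I. I \<subseteq> \<Omega> \<and> card I = card X} - {X}" and "S I \<noteq> 0"
      then have "I \<subseteq> X" using S_sub by auto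
      then have "I = X" using I finX card_subset_eq[OF finX] by auto
      then show False using I by simp
    qed
    finally show ?thesis using coeffF by simp
  qed
  have cbig: "coeff (F_poly \<Omega> P H \<alpha>) k = 0" if "k > card X" for k
  proof -
    have "S I = 0" if "I \<in> {I. I \<subseteq> \<Omega> \<and> card I = k}" for I
    proof (rule ccontr)
      assume "S I \<noteq> 0"
      then have "I \<subseteq> X" using S_sub that by auto
      then have "card I \<le> card X" using finX card_mono by blast
      then show False using that \<open>k > card X\<close> by simp
    qed
    then show ?thesis using coeffF by simp
  qed
  have deg: "degree (F_poly \<Omega> P H \<alpha>) = card X"
  proof (rule antisym)
    show "degree (F_poly \<Omega> P H \<alpha>) \<le> card X" using cbig by (intro degree_le) auto
    show "card X \<le> degree (F_poly \<Omega> P H \<alpha>)" using cX SXz z0 by (intro le_degree) simp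
  qed
  show ?thesis using deg cardX cX SXz unfolding z_def by simp
qed

end

theorem proposition2p2:
  fixes \<Omega> :: "'i set" and H :: "'i \<Rightarrow> ('a, 'b) monoid_scheme"
    and P :: "('i \<times> 'i) set" and \<alpha> :: "'i \<Rightarrow> 'a \<Rightarrow> complex"
    and D X :: "'i set"
  assumes "finite \<Omega>"
    and "\<And>i. i \<in> \<Omega> \<Longrightarrow> comm_group (H i)"
    and "\<And>i. i \<in> \<Omega> \<Longrightarrow> finite (carrier (H i))"
    and "\<And>i. i \<in> \<Omega> \<Longrightarrow> card (carrier (H i)) \<ge> 2"
    and "partial_order_on \<Omega> P"
    and "\<And>i. i \<in> \<Omega> \<Longrightarrow> character (H i) (\<alpha> i)"
    and "D = down_closure \<Omega> (P\<inverse>) (supp_char \<Omega> H \<alpha>)"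
    and "X = (\<Omega> - D) \<union> min_elems P D"
  shows "degree (F_poly \<Omega> P H \<alpha>) = card X
    \<and> card X = card \<Omega> - card D + card (min_elems P D)
    \<and> lead_coeff (F_poly \<Omega> P H \<alpha>) =
        of_int ((-1) ^ card (min_elems P D)
          * (\<Prod>i\<in>X - max_elems P X. int (card (carrier (H i))))
          * (\<Prod>i\<in>max_elems P X - min_elems P D. int (card (carrier (H i))) - 1))"
proof -
  interpret pctx \<Omega> H P \<alpha>
    using assms(1-3,5,6) by (simp add: pctx_def)
  show ?thesis by (rule main) (use assms in auto)
qed

end
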